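(* Let $F\subset S^3$ be a (connected, oriented) Seifert surface for a knot or link $K$ with $\operatorname{rank}H_1(F;\mathbb Z)=n$, and let $\alpha_1,\dots,\alpha_n$ be pairwise disjoint properly embedded arcs in $F$ such that $F\setminus\bigcup_i\alpha_i$ is a disk. For integers $k_1,\dots,k_n$, let $\widetilde F$ be the surface obtained from $F$ by full-twisting $F$ along each arc $\alpha_i$ exactly $k_i$ times, in the direction for which the Seifert form value of the loop $\ell_i$ dual to $\alpha_i$ (the embedded loop meeting $\bigcup_j\alpha_j$ transversely in exactly one point of $\alpha_i$) increases by $k_i$; and let $\widetilde K=\partial\widetilde F$. Then there exist positive integers $N_1,\dots,N_n$ such that whenever $k_i\ge N_i$ for all $i$, the Alexander polynomial of $\widetilde K$ has degree $n$ and all of its zeros have modulus $1$.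
   Context: The (reduced) Alexander polynomial of a knot or link with Seifert matrix $V$ is $\det(tV-V^T)$. Twisting along $\alpha_i$ changes only the self-linking of $\ell_i$, so a Seifert matrix of $\widetilde F$ with respect to the dual loops is obtained from one of $F$ by adding $k_i$ to the $i$-th diagonal entry. *)

theory Defs
  imports "Jordan_Normal_Form.Determinant" "HOL-Computational_Algebra.Polynomial" Complex_Main
begin

text \<open>A Seifert matrix (n x n, integer entries) is represented as a function
  V :: nat => nat => int, entries with indices below n being relevant.\<close>

definition twisted_seifert :: "(nat \<Rightarrow> nat \<Rightarrow> int) \<Rightarrow> (nat \<Rightarrow> int) \<Rightarrow> nat \<Rightarrow> nat \<Rightarrow> int" where
  "twisted_seifert V k i j = V i j + (if i = j then k i else 0)"

definition alexander_poly :: "nat \<Rightarrow> (nat \<Rightarrow> nat \<Rightarrow> int) \<Rightarrow> int poly" where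
  "alexander_poly n V = det (mat n n (\<lambda>(i, j). [: - V j i, V i j :]))"

end

theory Submission
  imports Defs "Jordan_Normal_Form.Char_Poly"
begin

lemma mph: "comm_ring_hom (map_poly (of_int :: int \<Rightarrow> complex))" by unfold_locales (simp_all add: hom_distribs)
lemma alex_hom: "map_poly (of_int :: int \<Rightarrow> complex) (alexander_poly n B) = det (map_mat (map_poly of_int) (mat n n (\<lambda>(i, j). [: - B j i, B i j :])))"
  unfolding alexander_poly_def
  by (rule comm_ring_hom.hom_det[OF mph, symmetric])

lemma amgm: "(x::real) * y \<le> (x^2 + y^2)/2"
  using zero_le_power2[of "x - y"] unfolding power2_diff by (simp add: field_simps)

lemma pos:
  fixes v :: "nat \<Rightarrow> complex" and V :: "nat \<Rightarrow> nat \<Rightarrow> int" and k :: "nat \<Rightarrow> int"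
  assumes K: "\<And>i. i<n \<Longrightarrow> real_of_int (k i) \<ge> 1 + (\<Sum>j<n. real_of_int (\<bar>V i j\<bar> + \<bar>V j i\<bar>))"
  and i0: "i0 < n" "v i0 \<noteq> 0"
  shows "Re (\<Sum>i<n. \<Sum>j<n. cnj (v i) * of_int (twisted_seifert V k i j) * v j) > 0"
proof -
  define a where "a = (\<lambda>i. cmod (v i))"
  define S where "S = (\<lambda>i. (\<Sum>j<n. real_of_int (\<bar>V i j\<bar> + \<bar>V j i\<bar>)))"
  have t: "Re (cnj (v i) * of_int (twisted_seifert V k i j) * v j) = real_of_int (V i j) * Re (cnj (v i) * v j) + (if i = j then real_of_int (k i) * (a i)^2 else 0)" for i j
  proof -
    have hv: "cnj (v i) * v i = complex_of_real ((a i)^2)" unfolding a_def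
      by (metis complex_norm_square mult.commute)
    show ?thesis
    proof (cases "i = j")
      case True
      have "cnj (v i) * of_int (twisted_seifert V k i j) * v j = of_int (V i j) * (cnj (v i) * v j) + of_int (k i) * (cnj (v i) * v i)"
        using True unfolding twisted_seifert_def by (simp add: algebra_simps)
      then have "Re (cnj (v i) * of_int (twisted_seifert V k i j) * v j) = Re (of_int (V i j) * (cnj (v i) * v j) + of_int (k i) * complex_of_real ((a i)^2))"
        by (simp only: hv)
      then show ?thesis using True by simp
    next
      case False
      then show ?thesis unfolding twisted_seifert_def by (simp add: algebra_simps)
    qed
  qed
  have e1: "Re (\<Sum>i<n. \<Sum>j<n. cnj (v i) * of_int (twisted_seifert V k i j) * v j) = (\<Sum>i<n. \<Sum>j<n. real_of_int (V i j) * Re (cnj (v i) * v j)) + (\<Sum>i<n. real_of_int (k i) * (a i)^2)"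
  proof -
    have "Re (\<Sum>i<n. \<Sum>j<n. cnj (v i) * of_int (twisted_seifert V k i j) * v j) = (\<Sum>i<n. \<Sum>j<n. Re (cnj (v i) * of_int (twisted_seifert V k i j) * v j))"
      by (simp only: Re_sum)
    also have "\<dots> = (\<Sum>i<n. \<Sum>j<n. real_of_int (V i j) * Re (cnj (v i) * v j) + (if i = j then real_of_int (k i) * (a i)^2 else 0))"
      by (simp only: t)
    also have "\<dots> = (\<Sum>i<n. \<Sum>j<n. real_of_int (V i j) * Re (cnj (v i) * v j)) + (\<Sum>i<n. real_of_int (k i) * (a i)^2)"
      by (simp only: sum.distrib) (simp add: sum.delta)
    finally show ?thesis .
  qed
  have e2: "real_of_int (V i j) * Re (cnj (v i) * v j) \<ge> - (real_of_int \<bar>V i j\<bar> * ((a i)^2 + (a j)^2) / 2)" for i j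
  proof -
    have "\<bar>Re (cnj (v i) * v j)\<bar> \<le> a i * a j" unfolding a_def
      using abs_Re_le_cmod[of "cnj (v i) * v j"] by (simp add: norm_mult)
    also have "\<dots> \<le> ((a i)^2 + (a j)^2) / 2" by (rule amgm)
    finally have h: "\<bar>Re (cnj (v i) * v j)\<bar> \<le> ((a i)^2 + (a j)^2) / 2" .
    have "\<bar>real_of_int (V i j) * Re (cnj (v i) * v j)\<bar> \<le> real_of_int \<bar>V i j\<bar> * ((a i)^2 + (a j)^2) / 2"
      using mult_left_mono[OF h, of "real_of_int \<bar>V i j\<bar>"] by (simp add: abs_mult)
    then show ?thesis by linarith
  qed
  have e2s: "(\<Sum>i<n. \<Sum>j<n. real_of_int (V i j) * Re (cnj (v i) * v j)) \<ge> (\<Sum>i<n. \<Sum>j<n. - (real_of_int \<bar>V i j\<bar> * ((a i)^2 + (a j)^2) / 2))"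
    by (intro sum_mono e2)
  have e3: "(\<Sum>i<n. \<Sum>j<n. real_of_int \<bar>V i j\<bar> * ((a i)^2 + (a j)^2) / 2) = (\<Sum>i<n. (a i)^2 * S i / 2)"
  proof -
    have "(\<Sum>i<n. \<Sum>j<n. real_of_int \<bar>V i j\<bar> * ((a i)^2 + (a j)^2) / 2) = (\<Sum>i<n. \<Sum>j<n. real_of_int \<bar>V i j\<bar> * (a i)^2 / 2) + (\<Sum>i<n. \<Sum>j<n. real_of_int \<bar>V i j\<bar> * (a j)^2 / 2)"
      by (simp add: sum.distrib[symmetric] add_divide_distrib distrib_left)
    also have "(\<Sum>i<n. \<Sum>j<n. real_of_int \<bar>V i j\<bar> * (a j)^2 / 2) = (\<Sum>i<n. \<Sum>j<n. real_of_int \<bar>V j i\<bar> * (a i)^2 / 2)"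
      by (rule sum.swap)
    also have "(\<Sum>i<n. \<Sum>j<n. real_of_int \<bar>V i j\<bar> * (a i)^2 / 2) + \<dots> = (\<Sum>i<n. (a i)^2 * S i / 2)"
      unfolding S_def by (simp add: sum.distrib[symmetric] sum_distrib_left sum_divide_distrib algebra_simps add_divide_distrib)
    finally show ?thesis .
  qed
  have e4: "(\<Sum>i<n. real_of_int (k i) * (a i)^2) \<ge> (\<Sum>i<n. (a i)^2) + (\<Sum>i<n. (a i)^2 * S i / 2)"
  proof -
    have "(\<Sum>i<n. (a i)^2) + (\<Sum>i<n. (a i)^2 * S i / 2) = (\<Sum>i<n. (a i)^2 * (1 + S i / 2))"
      by (simp add: sum.distrib[symmetric] algebra_simps)
    also have "\<dots> \<le> (\<Sum>i<n. real_of_int (k i) * (a i)^2)"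
    proof (rule sum_mono)
      fix i assume "i \<in> {..<n}"
      then have "real_of_int (k i) \<ge> 1 + S i" "S i \<ge> 0" using K unfolding S_def by (auto intro!: sum_nonneg)
      then have "1 + S i / 2 \<le> real_of_int (k i)" by linarith
      then show "(a i)^2 * (1 + S i / 2) \<le> real_of_int (k i) * (a i)^2"
        by (metis mult.commute mult_right_mono zero_le_power2)
    qed
    finally show ?thesis .
  qed
  have e5: "(\<Sum>i<n. (a i)^2) > 0"
  proof -
    have "(a i0)^2 > 0" using i0 unfolding a_def by simp
    moreover have "(a i0)^2 \<le> (\<Sum>i<n. (a i)^2)" using i0 by (intro member_le_sum) auto
    ultimately show ?thesis by linarith
  qed
  have "(\<Sum>i<n. \<Sum>j<n. - (real_of_int \<bar>V i j\<bar> * ((a i)^2 + (a j)^2) / 2)) = - (\<Sum>i<n. (a i)^2 * S i / 2)"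
    using e3 by (simp add: sum_negf)
  then show ?thesis using e1 e2s e4 e5 by linarith
qed


theorem theorem12p9:
  fixes n :: nat and V :: "nat \<Rightarrow> nat \<Rightarrow> int"
  shows "\<exists>N :: nat \<Rightarrow> int. (\<forall>i<n. N i > 0) \<and>
     (\<forall>k :: nat \<Rightarrow> int. (\<forall>i<n. k i \<ge> N i) \<longrightarrow>
        degree (alexander_poly n (twisted_seifert V k)) = n \<and>
        (\<forall>z :: complex. poly (map_poly of_int (alexander_poly n (twisted_seifert V k))) z = 0
            \<longrightarrow> cmod z = 1))"
proof -
  define N where "N = (\<lambda>i. 1 + (\<Sum>j<n. \<bar>V i j\<bar> + \<bar>V j i\<bar>))"
  have Npos: "\<forall>i<n. N i > 0" unfolding N_def
    by (auto intro!: add_pos_nonneg sum_nonneg)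
  have main: "degree (alexander_poly n (twisted_seifert V k)) = n \<and>
        (\<forall>z :: complex. poly (map_poly of_int (alexander_poly n (twisted_seifert V k))) z = 0
            \<longrightarrow> cmod z = 1)" if kN: "\<forall>i<n. k i \<ge> N i" for k
  proof -
    have K: "real_of_int (k i) \<ge> 1 + (\<Sum>j<n. real_of_int (\<bar>V i j\<bar> + \<bar>V j i\<bar>))" if "i < n" for i
    proof -
      have "real_of_int (N i) \<le> real_of_int (k i)" using kN that by simp
      then show ?thesis unfolding N_def by simp
    qed
    define B where "B = twisted_seifert V k"
    define A :: "complex mat" where "A = mat n n (\<lambda>(i,j). of_int (B i j))"
    have Ac: "A \<in> carrier_mat n n" unfolding A_def by simp
    have quad: "Re (\<Sum>i<n. \<Sum>j<n. cnj (v$i) * of_int (B i j) * v$j) > 0"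
      if v: "v \<in> carrier_vec n" "v \<noteq> 0\<^sub>v n" for v :: "complex vec"
    proof -
      obtain i0 where i0: "i0 < n" "v $ i0 \<noteq> 0"
        using v by (metis carrier_vecD eq_vecI index_zero_vec(1) index_zero_vec(2))
      show ?thesis unfolding B_def by (rule pos[where n=n and k=k and V=V and v="\<lambda>i. v $ i", OF K i0])
    qed
    have Av: "(A *\<^sub>v v) $ i = (\<Sum>j<n. of_int (B i j) * v$j)" if "v \<in> carrier_vec n" "i < n" for v i
      using that unfolding A_def by (auto simp: scalar_prod_def atLeast0LessThan intro!: sum.cong)
    have ATv: "(transpose_mat A *\<^sub>v v) $ i = (\<Sum>j<n. of_int (B j i) * v$j)" if "v \<in> carrier_vec n" "i < n" for v i
      using that unfolding A_def by (auto simp: scalar_prod_def atLeast0LessThan intro!: sum.cong)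
    have wsplit: "(\<Sum>i<n. \<Sum>j<n. cnj (v$i) * of_int (B i j) * v$j) = (\<Sum>i<n. cnj (v$i) * (\<Sum>j<n. of_int (B i j) * v$j))" for v :: "complex vec"
      by (simp add: sum_distrib_left mult.assoc)
    have detA: "det A \<noteq> 0"
    proof
      assume "det A = 0"
      then obtain v where v: "v \<in> carrier_vec n" "v \<noteq> 0\<^sub>v n" "A *\<^sub>v v = 0\<^sub>v n"
        using det_0_iff_vec_prod_zero_field[OF Ac] by auto
      have "(\<Sum>j<n. of_int (B i j) * v$j) = 0" if "i < n" for i
        using Av[OF v(1) that] v(3) that by simp
      then have "(\<Sum>i<n. \<Sum>j<n. cnj (v$i) * of_int (B i j) * v$j) = 0"
        unfolding wsplit by simp
      with quad[OF v(1,2)] show False by simp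
    qed
    obtain Bi where Bi: "Bi \<in> carrier_mat n n" "Bi * A = 1\<^sub>m n" "A * Bi = 1\<^sub>m n"
      using det_non_zero_imp_unit[OF Ac detA, unfolded Units_def, of "()"]
      by (auto simp: ring_mat_def)
    define AT where "AT = transpose_mat A"
    have ATc: "AT \<in> carrier_mat n n" unfolding AT_def using Ac by simp
    define C where "C = Bi * AT"
    have Cc: "C \<in> carrier_mat n n" unfolding C_def using Bi ATc by simp
    have AC: "A * C = AT" unfolding C_def
      using assoc_mult_mat[OF Ac Bi(1) ATc, symmetric] Bi(3) ATc by simp
    interpret ch: comm_ring_hom "\<lambda>a::complex. [:a:]"
      by unfold_locales auto
    define M where "M = mat n n (\<lambda>(i, j). [: - B j i, B i j :])"
    have Mc: "M \<in> carrier_mat n n" unfolding M_def by simp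
    have cpd: "dim_col (char_poly_matrix C) = n" "dim_row (char_poly_matrix C) = n"
      using char_poly_matrix_closed[OF Cc] by auto
    have fac: "map_mat (map_poly of_int) M = map_mat (\<lambda>a. [:a:]) A * char_poly_matrix C"
    proof (rule eq_matI)
      fix i j assume ij: "i < dim_row (map_mat (\<lambda>a. [:a:]) A * char_poly_matrix C)"
        "j < dim_col (map_mat (\<lambda>a. [:a:]) A * char_poly_matrix C)"
      then have i: "i < n" and j: "j < n" using Ac Cc char_poly_matrix_closed[OF Cc] by auto
      have "(map_mat (\<lambda>a. [:a:]) A * char_poly_matrix C) $$ (i,j)
         = (\<Sum>l\<in>{0..<n}. [:A $$ (i,l):] * ((if l = j then [:0,1:] else 0) + [: - C $$ (l,j) :]))"
        using i j Ac Cc by (auto simp: scalar_prod_def char_poly_matrix_def intro!: sum.cong)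
      also have "\<dots> = (\<Sum>l\<in>{0..<n}. [:A $$ (i,l):] * (if l = j then [:0,1:] else 0)) + (\<Sum>l\<in>{0..<n}. [: - (A $$ (i,l) * C $$ (l,j)) :])"
        by (simp add: sum.distrib distrib_left mult.commute)
      also have "(\<Sum>l\<in>{0..<n}. [:A $$ (i,l):] * (if l = j then [:0,1:] else 0)) = [:0, A $$ (i,j):]"
        using j by (simp add: if_distrib cong: if_cong)
      also have "(\<Sum>l\<in>{0..<n}. [: - (A $$ (i,l) * C $$ (l,j)) :]) = [: - (\<Sum>l\<in>{0..<n}. A $$ (i,l) * C $$ (l,j)) :]"
        using ch.hom_sum[of "\<lambda>l. - (A $$ (i,l) * C $$ (l,j))" "{0..<n}"] by (simp add: sum_negf)
      also have "(\<Sum>l\<in>{0..<n}. A $$ (i,l) * C $$ (l,j)) = (A * C) $$ (i,j)"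
        using i j Ac Cc by (simp add: scalar_prod_def)
      also have "\<dots> = A $$ (j,i)" using AC i j Ac unfolding AT_def by simp
      finally show "map_mat (map_poly of_int) M $$ (i, j) = (map_mat (\<lambda>a. [:a:]) A * char_poly_matrix C) $$ (i, j)"
        using i j unfolding M_def A_def by (simp add: of_int_hom.map_poly_pCons_hom)
    qed (use Ac Cc cpd in \<open>auto simp: M_def\<close>)
    have fac2: "map_poly of_int (alexander_poly n B) = [:det A:] * char_poly C"
    proof -
      have "map_poly of_int (alexander_poly n B) = det (map_mat (map_poly (of_int :: int \<Rightarrow> complex)) M)"
        unfolding M_def by (rule alex_hom)
      also have "\<dots> = det (map_mat (\<lambda>a. [:a:]) A) * det (char_poly_matrix C)"
        unfolding fac by (rule det_mult[of _ n]) (use Ac Cc in auto)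
      also have "\<dots> = [:det A:] * char_poly C" unfolding char_poly_def by simp
      finally show ?thesis .
    qed
    have deg: "degree (alexander_poly n B) = n"
    proof -
      have "degree (alexander_poly n B) = degree (map_poly (of_int :: int \<Rightarrow> complex) (alexander_poly n B))"
        by simp
      also have "\<dots> = degree (char_poly C)" unfolding fac2 using detA by simp
      also have "\<dots> = n" using degree_monic_char_poly[OF Cc] by simp
      finally show ?thesis .
    qed
    have roots: "cmod z = 1" if z: "poly (map_poly of_int (alexander_poly n B)) z = 0" for z :: complex
    proof -
      from z have "poly (char_poly C) z = 0" unfolding fac2 using detA by simp
      then have "eigenvalue C z" using eigenvalue_root_char_poly[OF Cc] by simp
      then obtain v where v: "v \<in> carrier_vec n" "v \<noteq> 0\<^sub>v n" "C *\<^sub>v v = z \<cdot>\<^sub>v v"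
        unfolding eigenvalue_def eigenvector_def using Cc by auto
      have "AT *\<^sub>v v = A *\<^sub>v (C *\<^sub>v v)"
        using AC Ac Cc v(1) by (metis assoc_mult_mat_vec)
      also have "\<dots> = z \<cdot>\<^sub>v (A *\<^sub>v v)" unfolding v(3) using Ac v(1) by (simp add: mult_mat_vec)
      finally have eq: "AT *\<^sub>v v = z \<cdot>\<^sub>v (A *\<^sub>v v)" .
      have rowq: "(\<Sum>j<n. of_int (B j i) * v$j) = z * (\<Sum>j<n. of_int (B i j) * v$j)" if i: "i < n" for i
      proof -
        have "(AT *\<^sub>v v) $ i = (z \<cdot>\<^sub>v (A *\<^sub>v v)) $ i" using eq by simp
        then show ?thesis using ATv[OF v(1) i] Av[OF v(1) i] i Ac unfolding AT_def by simp
      qed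
      define w where "w = (\<Sum>i<n. \<Sum>j<n. cnj (v$i) * of_int (B i j) * v$j)"
      have "z * w = (\<Sum>i<n. cnj (v$i) * (z * (\<Sum>j<n. of_int (B i j) * v$j)))"
        unfolding w_def wsplit sum_distrib_left[of z] by (rule sum.cong) (simp_all add: mult.left_commute sum_distrib_left)
      also have "\<dots> = (\<Sum>i<n. cnj (v$i) * (\<Sum>j<n. of_int (B j i) * v$j))"
        by (rule sum.cong) (simp_all add: rowq)
      also have "\<dots> = (\<Sum>i<n. \<Sum>j<n. cnj (v$i) * of_int (B j i) * v$j)"
        by (simp add: sum_distrib_left mult.assoc)
      also have "\<dots> = (\<Sum>j<n. \<Sum>i<n. cnj (v$i) * of_int (B j i) * v$j)"
        by (rule sum.swap)
      also have "\<dots> = cnj w" unfolding w_def by (simp add: algebra_simps)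
      finally have zw: "z * w = cnj w" .
      have "w \<noteq> 0" using quad[OF v(1,2)] unfolding w_def[symmetric] by auto
      then have "cmod w > 0" by simp
      moreover have "cmod z * cmod w = cmod w" using arg_cong[OF zw, of cmod] by (simp add: norm_mult)
      ultimately show ?thesis by simp
    qed
    show ?thesis using deg roots unfolding B_def by blast
  qed
  show ?thesis using Npos main by blast
qed

end
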